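(* Let $(S,\mathcal{S})$ be a measurable space with $\Delta\in\mathcal{S}\otimes\mathcal{S}$. Then every constructive map $\tau:\Omega\to C(S)$ is the union of countably many pairwise disjoint finite cr-sets (i.e. there are finite cr-sets $\rho_n$ with $\rho_n(\omega)\cap\rho_m(\omega)=\emptyset$ for $n\neq m$ and $\tau(\omega)=\bigcup_n\rho_n(\omega)$ for all $\omega$). In particular, $\tau$ is $\mathcal{F}$-$\mathcal{C}(\mathcal{S})$ measurable, i.e. a cr-set.
   Context: $\Delta=\{(x,x)\mid x\in S\}$. $(\Omega,\mathcal{F},P)$ is a probability space; $C(S)$ is the set of countable subsets of $S$; $N_A(M)=|A\cap M|$; $\mathcal{C}(\mathcal{S})=\sigma(N_A\mid A\in\mathcal{S})$; a cr-set is an $\mathcal{F}$-$\mathcal{C}(\mathcal{S})$ measurable map $\Omega\to C(S)$, finite if its values are finite sets. A map $\tau:\Omega\to C(S)$ is constructive if $\tau(\omega)=\bigcup_k\pi_k(\omega)$ for all $\omega$ for some finite cr-sets $\pi_k$, $k\in\mathbb{N}$. *)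

theory Defs
  imports "HOL-Probability.Probability"
begin

definition cset_space :: "'a measure \<Rightarrow> 'a set set" where
  "cset_space M = {X. X \<subseteq> space M \<and> countable X}"

definition cnt :: "'a set \<Rightarrow> 'a set \<Rightarrow> enat" where
  "cnt A X = (if finite (A \<inter> X) then enat (card (A \<inter> X)) else \<infinity>)"

text \<open>The measurable space (C(S), \<C>(\<S>)), where \<C>(\<S>) is the sigma-algebra generated by
  the maps N_A, A in \<S> (with the discrete sigma-algebra on the extended naturals).\<close>
definition cset_measure :: "'a measure \<Rightarrow> 'a set measure" where
  "cset_measure M = sigma (cset_space M)
     {cnt A -` B \<inter> cset_space M | A B. A \<in> sets M}"

definition crset :: "'w measure \<Rightarrow> 'a measure \<Rightarrow> ('w \<Rightarrow> 'a set) \<Rightarrow> bool" where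
  "crset F M \<xi> \<longleftrightarrow> \<xi> \<in> measurable F (cset_measure M)"

definition finite_crset :: "'w measure \<Rightarrow> 'a measure \<Rightarrow> ('w \<Rightarrow> 'a set) \<Rightarrow> bool" where
  "finite_crset F M \<xi> \<longleftrightarrow> crset F M \<xi> \<and> (\<forall>\<omega>\<in>space F. finite (\<xi> \<omega>))"

definition constructive :: "'w measure \<Rightarrow> 'a measure \<Rightarrow> ('w \<Rightarrow> 'a set) \<Rightarrow> bool" where
  "constructive F M \<tau> \<longleftrightarrow>
     (\<forall>\<omega>\<in>space F. \<tau> \<omega> \<in> cset_space M) \<and>
     (\<exists>\<pi> :: nat \<Rightarrow> 'w \<Rightarrow> 'a set. (\<forall>k. finite_crset F M (\<pi> k)) \<and>
        (\<forall>\<omega>\<in>space F. \<tau> \<omega> = (\<Union>k. \<pi> k \<omega>)))"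

end

theory Submission imports Defs begin

abbreviation natm :: "'w measure \<Rightarrow> ('w \<Rightarrow> nat) \<Rightarrow> bool" where
  "natm F f \<equiv> f \<in> measurable F (count_space UNIV)"

lemma natm_iff: "natm F f \<longleftrightarrow> (\<forall>m. {\<omega>\<in>space F. f \<omega> = m} \<in> sets F)"
proof -
  have "\<And>m. f -` {m} \<inter> space F = {\<omega>\<in>space F. f \<omega> = m}" by auto
  then show ?thesis by (simp add: measurable_count_space_eq2_countable)
qed

lemma natm_ge:
  assumes "\<And>m. {\<omega>\<in>space F. m \<le> f \<omega>} \<in> sets F" shows "natm F f"
proof -
  have "\<And>m. {\<omega>\<in>space F. f \<omega> = m} = {\<omega>\<in>space F. m \<le> f \<omega>} - {\<omega>\<in>space F. Suc m \<le> f \<omega>}" by auto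
  then show ?thesis unfolding natm_iff using assms by auto
qed

lemma natm_ge_sets: assumes "natm F f" shows "{\<omega>\<in>space F. m \<le> f \<omega>} \<in> sets F"
proof -
  have "f -` {m..} \<inter> space F \<in> sets F" using measurable_sets[OF assms] by auto
  moreover have "f -` {m..} \<inter> space F = {\<omega>\<in>space F. m \<le> f \<omega>}" by auto
  ultimately show ?thesis by simp
qed

lemma natm_binop:
  assumes f: "natm F f" and g: "natm F g"
  shows "natm F (\<lambda>\<omega>. h (f \<omega>) (g \<omega>))"
  unfolding natm_iff
proof
  fix m
  have "{\<omega>\<in>space F. h (f \<omega>) (g \<omega>) = m} = (\<Union>a. \<Union>b. if h a b = m then {\<omega>\<in>space F. f \<omega> = a} \<inter> {\<omega>\<in>space F. g \<omega> = b} else {})"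
    by auto
  also have "\<dots> \<in> sets F" using f g unfolding natm_iff by (auto intro!: sets.countable_UN)
  finally show "{\<omega>\<in>space F. h (f \<omega>) (g \<omega>) = m} \<in> sets F" .
qed

lemma natm_const: "natm F (\<lambda>_. c)" by simp

lemma finite_subset_UN_prefix:
  fixes B :: "nat \<Rightarrow> 'a set"
  assumes "finite X" "X \<subseteq> (\<Union>i. B i)" shows "\<exists>n. X \<subseteq> (\<Union>i<n. B i)"
  using assms
proof (induction X rule: finite_induct)
  case empty then show ?case by auto
next
  case (insert x X)
  then obtain n where n: "X \<subseteq> (\<Union>i<n. B i)" by auto
  from insert obtain i where i: "x \<in> B i" by auto
  have "insert x X \<subseteq> (\<Union>j<max n (Suc i). B j)" using n i by force
  then show ?case by blast
qed

lemma enat_le_cnt_iff: "enat m \<le> cnt A X \<longleftrightarrow> (\<exists>D. D \<subseteq> A \<inter> X \<and> finite D \<and> card D = m)"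
proof
  assume h: "enat m \<le> cnt A X"
  show "\<exists>D. D \<subseteq> A \<inter> X \<and> finite D \<and> card D = m"
  proof (cases "finite (A \<inter> X)")
    case True
    then have "m \<le> card (A \<inter> X)" using h by (simp add: cnt_def)
    then show ?thesis using True by (meson obtain_subset_with_card_n rev_finite_subset)
  next
    case False
    then show ?thesis by (meson infinite_arbitrarily_large)
  qed
next
  assume "\<exists>D. D \<subseteq> A \<inter> X \<and> finite D \<and> card D = m"
  then obtain D where D: "D \<subseteq> A \<inter> X" "finite D" "card D = m" by blast
  show "enat m \<le> cnt A X"
  proof (cases "finite (A \<inter> X)")
    case True
    then have "m \<le> card (A \<inter> X)" using D card_mono by blast
    then show ?thesis using True by (simp add: cnt_def)
  qed (simp add: cnt_def)
qed

lemma enat_eq_inf_iff: "(x::enat) = \<infinity> \<longleftrightarrow> (\<forall>m. enat m \<le> x)"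
  by (metis Suc_n_not_le_n enat.exhaust enat_ord_simps(1) enat_ord_simps(3))

lemma crsetI:
  assumes sp: "\<And>\<omega>. \<omega> \<in> space F \<Longrightarrow> \<xi> \<omega> \<in> cset_space M"
    and ge: "\<And>A m. A \<in> sets M \<Longrightarrow> {\<omega>\<in>space F. enat m \<le> cnt A (\<xi> \<omega>)} \<in> sets F"
  shows "crset F M \<xi>"
  unfolding crset_def cset_measure_def
proof (rule measurable_measure_of)
  show "{cnt A -` B \<inter> cset_space M |A B. A \<in> sets M} \<subseteq> Pow (cset_space M)" by auto
  show "\<xi> \<in> space F \<rightarrow> cset_space M" using sp by auto
  fix y assume "y \<in> {cnt A -` B \<inter> cset_space M |A B. A \<in> sets M}"
  then obtain A B where y: "y = cnt A -` B \<inter> cset_space M" and A: "A \<in> sets M" by auto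
  define L where "L m = {\<omega>\<in>space F. enat m \<le> cnt A (\<xi> \<omega>)}" for m
  have L: "L m \<in> sets F" for m using ge[OF A] L_def by simp
  have "\<xi> -` y \<inter> space F = (\<Union>m. if enat m \<in> B then L m - L (Suc m) else {})
      \<union> (if \<infinity> \<in> B then (\<Inter>m. L m) else {})" (is "?l = ?r")
  proof (intro set_eqI iffI)
    fix \<omega> assume "\<omega> \<in> ?l"
    then have w: "\<omega> \<in> space F" "cnt A (\<xi> \<omega>) \<in> B" using y by auto
    show "\<omega> \<in> ?r"
    proof (cases "cnt A (\<xi> \<omega>)")
      case (enat k)
      then have "\<omega> \<in> L k - L (Suc k)" using w by (auto simp: L_def)
      then show ?thesis using w enat by auto
    next
      case infinity
      then show ?thesis using w by (auto simp: L_def)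
    qed
  next
    fix \<omega> assume r: "\<omega> \<in> ?r"
    have "\<omega> \<in> space F \<and> cnt A (\<xi> \<omega>) \<in> B"
    proof (cases "\<omega> \<in> (\<Union>m. if enat m \<in> B then L m - L (Suc m) else {})")
      case True
      then obtain m where "enat m \<in> B" "\<omega> \<in> L m" "\<omega> \<notin> L (Suc m)" by (auto split: if_splits)
      then have "\<omega> \<in> space F" "cnt A (\<xi> \<omega>) = enat m" unfolding L_def
        by (auto, metis Suc_ile_eq enat.exhaust enat_ord_simps(1,3) le_antisym not_less_eq_eq)
      then show ?thesis using \<open>enat m \<in> B\<close> by auto
    next
      case False
      then have "\<infinity> \<in> B" "\<forall>m. \<omega> \<in> L m" using r by (auto split: if_splits)
      then have "cnt A (\<xi> \<omega>) = \<infinity>" "\<omega> \<in> space F" using enat_eq_inf_iff unfolding L_def by auto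
      then show ?thesis using \<open>\<infinity> \<in> B\<close> by auto
    qed
    then show "\<omega> \<in> ?l" using y sp by auto
  qed
  also have "?r \<in> sets F" using L by (auto intro!: sets.countable_UN sets.Un sets.countable_INT)
  finally show "\<xi> -` y \<inter> space F \<in> sets F" .
qed


lemma space_cset_measure: "space (cset_measure M) = cset_space M"
  unfolding cset_measure_def by (rule space_measure_of) auto

lemma finite_crset_card:
  assumes "finite_crset F M \<xi>" "A \<in> sets M"
  shows "natm F (\<lambda>\<omega>. card (A \<inter> \<xi> \<omega>))"
  unfolding natm_iff
proof
  fix m
  have meas: "\<xi> \<in> measurable F (cset_measure M)" and fin: "\<And>\<omega>. \<omega>\<in>space F \<Longrightarrow> finite (\<xi> \<omega>)"
    using assms(1) by (auto simp: finite_crset_def crset_def)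
  let ?G = "cnt A -` {enat m} \<inter> cset_space M"
  have "?G \<in> sets (cset_measure M)" unfolding cset_measure_def
    by (subst sets_measure_of) (auto intro!: sigma_sets.Basic assms(2))
  then have "\<xi> -` ?G \<inter> space F \<in> sets F" using meas by (rule measurable_sets[rotated])
  moreover have "\<xi> -` ?G \<inter> space F = {\<omega>\<in>space F. card (A \<inter> \<xi> \<omega>) = m}"
    using measurable_space[OF meas] fin by (auto simp: cnt_def space_cset_measure)
  ultimately show "{\<omega>\<in>space F. card (A \<inter> \<xi> \<omega>) = m} \<in> sets F" by simp
qed

lemma finite_crsetI:
  assumes sp: "\<And>\<omega>. \<omega> \<in> space F \<Longrightarrow> \<xi> \<omega> \<subseteq> space M \<and> finite (\<xi> \<omega>)"
    and c: "\<And>A. A \<in> sets M \<Longrightarrow> natm F (\<lambda>\<omega>. card (A \<inter> \<xi> \<omega>))"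
  shows "finite_crset F M \<xi>"
  unfolding finite_crset_def
proof
  show "crset F M \<xi>"
  proof (rule crsetI)
    fix \<omega> assume "\<omega> \<in> space F" then show "\<xi> \<omega> \<in> cset_space M"
      using sp by (auto simp: cset_space_def intro: countable_finite)
  next
    fix A m assume A: "A \<in> sets M"
    have "{\<omega>\<in>space F. enat m \<le> cnt A (\<xi> \<omega>)} = {\<omega>\<in>space F. m \<le> card (A \<inter> \<xi> \<omega>)}"
      using sp by (auto simp: cnt_def)
    then show "{\<omega>\<in>space F. enat m \<le> cnt A (\<xi> \<omega>)} \<in> sets F" using natm_ge_sets[OF c[OF A]] by simp
  qed
qed (use sp in auto)

lemma finite_crset_sub:
  assumes "finite_crset F M \<xi>" "\<omega> \<in> space F" shows "\<xi> \<omega> \<subseteq> space M" "finite (\<xi> \<omega>)"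
  using assms measurable_space[of \<xi> F "cset_measure M" \<omega>]
  by (auto simp: finite_crset_def crset_def space_cset_measure cset_space_def)

lemma dynkin_card:
  assumes p: "finite_crset F M \<pi>" and s: "finite_crset F M \<sigma>" and C: "C \<in> sets (M \<Otimes>\<^sub>M M)"
  shows "natm F (\<lambda>\<omega>. card (C \<inter> (\<pi> \<omega> \<times> \<sigma> \<omega>)))"
  using Int_stable_pair_measure_generator[of M M] pair_measure_closed[of M M] C[unfolded sets_pair_measure]
proof (induction rule: sigma_sets_induct_disjoint)
  case (basic C)
  then obtain a b where C: "C = a \<times> b" "a \<in> sets M" "b \<in> sets M" by auto
  have "\<And>\<omega>. card (C \<inter> (\<pi> \<omega> \<times> \<sigma> \<omega>)) = card (a \<inter> \<pi> \<omega>) * card (b \<inter> \<sigma> \<omega>)"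
    using C by (simp add: Times_Int_Times card_cartesian_product)
  then show ?case using natm_binop[OF finite_crset_card[OF p C(2)] finite_crset_card[OF s C(3)], of "(*)"]
    by simp
next
  case empty then show ?case by simp
next
  case (compl C)
  have eq: "card ((space M \<times> space M - C) \<inter> (\<pi> \<omega> \<times> \<sigma> \<omega>)) =
     card (space M \<inter> \<pi> \<omega>) * card (space M \<inter> \<sigma> \<omega>) - card (C \<inter> (\<pi> \<omega> \<times> \<sigma> \<omega>))"
    if w: "\<omega> \<in> space F" for \<omega>
  proof -
    have sub: "\<pi> \<omega> \<subseteq> space M" "\<sigma> \<omega> \<subseteq> space M" "finite (\<pi> \<omega>)" "finite (\<sigma> \<omega>)"
      using finite_crset_sub[OF p w] finite_crset_sub[OF s w] by auto
    then have "(space M \<times> space M - C) \<inter> (\<pi> \<omega> \<times> \<sigma> \<omega>) = (\<pi> \<omega> \<times> \<sigma> \<omega>) - (C \<inter> (\<pi> \<omega> \<times> \<sigma> \<omega>))"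
      by auto
    moreover have "space M \<inter> \<pi> \<omega> = \<pi> \<omega>" "space M \<inter> \<sigma> \<omega> = \<sigma> \<omega>" using sub by auto
    ultimately show ?thesis using sub
      by (simp add: card_Diff_subset card_cartesian_product)
  qed
  have "natm F (\<lambda>\<omega>. card (space M \<inter> \<pi> \<omega>) * card (space M \<inter> \<sigma> \<omega>) - card (C \<inter> (\<pi> \<omega> \<times> \<sigma> \<omega>)))"
    using natm_binop[OF natm_binop[OF finite_crset_card[OF p sets.top] finite_crset_card[OF s sets.top], of "(*)"] compl.IH, of "(-)"]
    by simp
  then show ?case using eq by (subst measurable_cong) auto
next
  case (union A)
  define K where "K \<omega> = \<pi> \<omega> \<times> \<sigma> \<omega>" for \<omega>
  have pre: "natm F (\<lambda>\<omega>. card ((\<Union>i<n. A i) \<inter> K \<omega>))" for n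
  proof (induction n)
    case 0 then show ?case by simp
  next
    case (Suc n)
    have eq: "card ((\<Union>i<Suc n. A i) \<inter> K \<omega>) = card (A n \<inter> K \<omega>) + card ((\<Union>i<n. A i) \<inter> K \<omega>)"
      if w: "\<omega> \<in> space F" for \<omega>
    proof -
      have fK: "finite (K \<omega>)" using finite_crset_sub[OF p w] finite_crset_sub[OF s w] by (simp add: K_def)
      have "(\<Union>i<Suc n. A i) \<inter> K \<omega> = (A n \<inter> K \<omega>) \<union> ((\<Union>i<n. A i) \<inter> K \<omega>)"
        by (auto simp: lessThan_Suc)
      moreover have "(A n \<inter> K \<omega>) \<inter> ((\<Union>i<n. A i) \<inter> K \<omega>) = {}"
        using union.hyps(1) unfolding disjoint_family_on_def by (auto, metis disjoint_iff less_irrefl)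
      ultimately show ?thesis using fK by (simp add: card_Un_disjoint)
    qed
    have "natm F (\<lambda>\<omega>. card (A n \<inter> K \<omega>) + card ((\<Union>i<n. A i) \<inter> K \<omega>))"
      using natm_binop[OF union.IH[of n, folded K_def] Suc.IH, of "(+)"] by simp
    then show ?case using eq by (subst measurable_cong) auto
  qed
  have ge: "m \<le> card ((\<Union>i. A i) \<inter> K \<omega>) \<longleftrightarrow> (\<exists>n. m \<le> card ((\<Union>i<n. A i) \<inter> K \<omega>))"
    if w: "\<omega> \<in> space F" for \<omega> m
  proof -
    have fK: "finite (K \<omega>)" using finite_crset_sub[OF p w] finite_crset_sub[OF s w] by (simp add: K_def)
    have "finite ((\<Union>i. A i) \<inter> K \<omega>)" using fK by simp
    moreover have "(\<Union>i. A i) \<inter> K \<omega> \<subseteq> (\<Union>i. A i \<inter> K \<omega>)" by auto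
    ultimately obtain n where n: "(\<Union>i. A i) \<inter> K \<omega> \<subseteq> (\<Union>i<n. A i \<inter> K \<omega>)"
      using finite_subset_UN_prefix by blast
    have "(\<Union>i<n. A i \<inter> K \<omega>) = (\<Union>i<n. A i) \<inter> K \<omega>" by auto
    with n have e1: "card ((\<Union>i. A i) \<inter> K \<omega>) \<le> card ((\<Union>i<n. A i) \<inter> K \<omega>)"
      using fK by (metis card_mono finite_Int)
    have "card ((\<Union>i<n'. A i) \<inter> K \<omega>) \<le> card ((\<Union>i. A i) \<inter> K \<omega>)" for n'
      using fK by (intro card_mono) auto
    then show ?thesis using e1 by (meson order_trans)
  qed
  have "natm F (\<lambda>\<omega>. card ((\<Union>i. A i) \<inter> K \<omega>))"
  proof (rule natm_ge)
    fix m
    have "{\<omega>\<in>space F. m \<le> card ((\<Union>i. A i) \<inter> K \<omega>)} = (\<Union>n. {\<omega>\<in>space F. m \<le> card ((\<Union>i<n. A i) \<inter> K \<omega>)})"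
      using ge by auto
    also have "\<dots> \<in> sets F" using natm_ge_sets[OF pre] by auto
    finally show "{\<omega>\<in>space F. m \<le> card ((\<Union>i. A i) \<inter> K \<omega>)} \<in> sets F" .
  qed
  then show ?case by (simp add: K_def)
qed


lemma card_Int_crset:
  assumes D: "{(x, x) | x. x \<in> space M} \<in> sets (M \<Otimes>\<^sub>M M)"
    and p: "finite_crset F M \<pi>" and s: "finite_crset F M \<sigma>" and A: "A \<in> sets M"
  shows "natm F (\<lambda>\<omega>. card (A \<inter> (\<pi> \<omega> \<inter> \<sigma> \<omega>)))"
proof -
  let ?C = "{(x, x) | x. x \<in> space M} \<inter> (A \<times> space M)"
  have C: "?C \<in> sets (M \<Otimes>\<^sub>M M)" using D A by (intro sets.Int pair_measureI) auto
  have eq: "card (?C \<inter> (\<pi> \<omega> \<times> \<sigma> \<omega>)) = card (A \<inter> (\<pi> \<omega> \<inter> \<sigma> \<omega>))" if w: "\<omega> \<in> space F" for \<omega>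
  proof -
    have "?C \<inter> (\<pi> \<omega> \<times> \<sigma> \<omega>) = (\<lambda>x. (x, x)) ` (A \<inter> (\<pi> \<omega> \<inter> \<sigma> \<omega>))"
      using finite_crset_sub[OF p w] by auto
    moreover have "inj_on (\<lambda>x. (x, x)) (A \<inter> (\<pi> \<omega> \<inter> \<sigma> \<omega>))" by (auto simp: inj_on_def)
    ultimately show ?thesis by (simp add: card_image)
  qed
  show ?thesis using dynkin_card[OF p s C] eq by (subst (asm) measurable_cong) auto
qed

lemma finite_crset_Int:
  assumes D: "{(x, x) | x. x \<in> space M} \<in> sets (M \<Otimes>\<^sub>M M)"
    and p: "finite_crset F M \<pi>" and s: "finite_crset F M \<sigma>"
  shows "finite_crset F M (\<lambda>\<omega>. \<pi> \<omega> \<inter> \<sigma> \<omega>)"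
  using finite_crset_sub[OF p] card_Int_crset[OF D p s] by (intro finite_crsetI) auto

lemma finite_crset_Diff:
  assumes D: "{(x, x) | x. x \<in> space M} \<in> sets (M \<Otimes>\<^sub>M M)"
    and p: "finite_crset F M \<pi>" and s: "finite_crset F M \<sigma>"
  shows "finite_crset F M (\<lambda>\<omega>. \<pi> \<omega> - \<sigma> \<omega>)"
proof (rule finite_crsetI)
  fix \<omega> assume "\<omega> \<in> space F" then show "\<pi> \<omega> - \<sigma> \<omega> \<subseteq> space M \<and> finite (\<pi> \<omega> - \<sigma> \<omega>)"
    using finite_crset_sub[OF p] by auto
next
  fix A assume A: "A \<in> sets M"
  have eq: "card (A \<inter> (\<pi> \<omega> - \<sigma> \<omega>)) = card (A \<inter> \<pi> \<omega>) - card (A \<inter> (\<pi> \<omega> \<inter> \<sigma> \<omega>))"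
    if w: "\<omega> \<in> space F" for \<omega>
  proof -
    have "A \<inter> (\<pi> \<omega> - \<sigma> \<omega>) = (A \<inter> \<pi> \<omega>) - (A \<inter> (\<pi> \<omega> \<inter> \<sigma> \<omega>))" by auto
    moreover have "A \<inter> (\<pi> \<omega> \<inter> \<sigma> \<omega>) \<subseteq> A \<inter> \<pi> \<omega>" by auto
    ultimately show ?thesis using finite_crset_sub[OF p w] by (simp add: card_Diff_subset)
  qed
  show "natm F (\<lambda>\<omega>. card (A \<inter> (\<pi> \<omega> - \<sigma> \<omega>)))"
    using natm_binop[OF finite_crset_card[OF p A] card_Int_crset[OF D p s A], of "(-)"] eq
    by (subst measurable_cong) auto
qed

lemma finite_crset_Un:
  assumes D: "{(x, x) | x. x \<in> space M} \<in> sets (M \<Otimes>\<^sub>M M)"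
    and p: "finite_crset F M \<pi>" and s: "finite_crset F M \<sigma>"
  shows "finite_crset F M (\<lambda>\<omega>. \<pi> \<omega> \<union> \<sigma> \<omega>)"
proof (rule finite_crsetI)
  fix \<omega> assume "\<omega> \<in> space F" then show "\<pi> \<omega> \<union> \<sigma> \<omega> \<subseteq> space M \<and> finite (\<pi> \<omega> \<union> \<sigma> \<omega>)"
    using finite_crset_sub[OF p] finite_crset_sub[OF s] by auto
next
  fix A assume A: "A \<in> sets M"
  have eq: "card (A \<inter> (\<pi> \<omega> \<union> \<sigma> \<omega>)) = card (A \<inter> \<pi> \<omega>) + card (A \<inter> \<sigma> \<omega>) - card (A \<inter> (\<pi> \<omega> \<inter> \<sigma> \<omega>))"
    if w: "\<omega> \<in> space F" for \<omega>
  proof -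
    have "A \<inter> (\<pi> \<omega> \<union> \<sigma> \<omega>) = (A \<inter> \<pi> \<omega>) \<union> (A \<inter> \<sigma> \<omega>)" "A \<inter> (\<pi> \<omega> \<inter> \<sigma> \<omega>) = (A \<inter> \<pi> \<omega>) \<inter> (A \<inter> \<sigma> \<omega>)" by auto
    then show ?thesis using finite_crset_sub[OF p w] finite_crset_sub[OF s w]
      by (metis card_Un_Int diff_add_inverse2 finite_Int)
  qed
  show "natm F (\<lambda>\<omega>. card (A \<inter> (\<pi> \<omega> \<union> \<sigma> \<omega>)))"
    using natm_binop[OF natm_binop[OF finite_crset_card[OF p A] finite_crset_card[OF s A], of "(+)"]
      card_Int_crset[OF D p s A], of "(-)"] eq
    by (subst measurable_cong) auto
qed

lemma finite_crset_empty: "finite_crset F M (\<lambda>_. {})"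
  by (rule finite_crsetI) auto

theorem proposition6p2:
  fixes F :: "'w measure" and M :: "'a measure" and \<tau> :: "'w \<Rightarrow> 'a set"
  assumes "prob_space F"
    and "{(x, x) | x. x \<in> space M} \<in> sets (M \<Otimes>\<^sub>M M)"
    and "constructive F M \<tau>"
  shows "(\<exists>\<rho> :: nat \<Rightarrow> 'w \<Rightarrow> 'a set. (\<forall>n. finite_crset F M (\<rho> n)) \<and>
            (\<forall>\<omega>\<in>space F. \<forall>n m. n \<noteq> m \<longrightarrow> \<rho> n \<omega> \<inter> \<rho> m \<omega> = {}) \<and>
            (\<forall>\<omega>\<in>space F. \<tau> \<omega> = (\<Union>n. \<rho> n \<omega>)))
         \<and> crset F M \<tau>"
proof -
  note D = assms(2)
  obtain \<pi> :: "nat \<Rightarrow> 'w \<Rightarrow> 'a set" where pi: "\<And>k. finite_crset F M (\<pi> k)"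
    and tau: "\<And>\<omega>. \<omega>\<in>space F \<Longrightarrow> \<tau> \<omega> = (\<Union>k. \<pi> k \<omega>)"
    and tsp: "\<And>\<omega>. \<omega>\<in>space F \<Longrightarrow> \<tau> \<omega> \<in> cset_space M"
  proof -
    from assms(3) have c1: "\<forall>\<omega>\<in>space F. \<tau> \<omega> \<in> cset_space M"
      and c2: "\<exists>\<pi> :: nat \<Rightarrow> 'w \<Rightarrow> 'a set. (\<forall>k. finite_crset F M (\<pi> k)) \<and>
        (\<forall>\<omega>\<in>space F. \<tau> \<omega> = (\<Union>k. \<pi> k \<omega>))"
      unfolding constructive_def by auto
    from c2 obtain \<pi> :: "nat \<Rightarrow> 'w \<Rightarrow> 'a set" where "\<forall>k. finite_crset F M (\<pi> k)"
        "\<forall>\<omega>\<in>space F. \<tau> \<omega> = (\<Union>k. \<pi> k \<omega>)" by blast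
    then show ?thesis using c1 by (intro that) auto
  qed
  define U where "U n \<omega> = (\<Union>k<n. \<pi> k \<omega>)" for n \<omega>
  have U: "finite_crset F M (U n)" for n
  proof (induction n)
    case 0 then show ?case using finite_crset_empty by (simp add: U_def)
  next
    case (Suc n)
    have "U (Suc n) = (\<lambda>\<omega>. \<pi> n \<omega> \<union> U n \<omega>)" by (auto simp: U_def lessThan_Suc fun_eq_iff)
    then show ?case using finite_crset_Un[OF D pi Suc.IH] by simp
  qed
  define \<rho> where "\<rho> n \<omega> = \<pi> n \<omega> - U n \<omega>" for n \<omega>
  have rho: "finite_crset F M (\<rho> n)" for n
    using finite_crset_Diff[OF D pi U] by (simp add: \<rho>_def[abs_def])
  have disj: "\<rho> n \<omega> \<inter> \<rho> m \<omega> = {}" if "n \<noteq> m" for n m \<omega>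
  proof -
    have lt: "\<rho> a \<omega> \<inter> \<rho> b \<omega> = {}" if "a < b" for a b
      using that by (auto simp: \<rho>_def U_def)
    from \<open>n \<noteq> m\<close> have "n < m \<or> m < n" by arith
    then show ?thesis
    proof
      assume "n < m" then show ?thesis using lt[of n m] by simp
    next
      assume "m < n" then show ?thesis using lt[of m n] by blast
    qed
  qed
  have unr: "(\<Union>k. \<pi> k \<omega>) = (\<Union>n. \<rho> n \<omega>)" for \<omega>
  proof
    show "(\<Union>k. \<pi> k \<omega>) \<subseteq> (\<Union>n. \<rho> n \<omega>)"
    proof
      fix x assume "x \<in> (\<Union>k. \<pi> k \<omega>)"
      then obtain k where k: "x \<in> \<pi> k \<omega>" by auto
      let ?k = "LEAST k. x \<in> \<pi> k \<omega>"
      have "x \<in> \<pi> ?k \<omega>" using k by (rule LeastI)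
      moreover have "x \<notin> U ?k \<omega>"
      proof
        assume "x \<in> U ?k \<omega>"
        then obtain j where "j < ?k" "x \<in> \<pi> j \<omega>" unfolding U_def by blast
        then show False using not_less_Least by blast
      qed
      ultimately have "x \<in> \<rho> ?k \<omega>" unfolding \<rho>_def by blast
      then show "x \<in> (\<Union>n. \<rho> n \<omega>)" by auto
    qed
  qed (auto simp: \<rho>_def)
  have unU: "(\<Union>k. \<pi> k \<omega>) = (\<Union>n. U n \<omega>)" for \<omega>
  proof
    show "(\<Union>k. \<pi> k \<omega>) \<subseteq> (\<Union>n. U n \<omega>)"
    proof
      fix x assume "x \<in> (\<Union>k. \<pi> k \<omega>)"
      then obtain k where "x \<in> \<pi> k \<omega>" by blast
      then have "x \<in> U (Suc k) \<omega>" unfolding U_def by blast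
      then show "x \<in> (\<Union>n. U n \<omega>)" by blast
    qed
    show "(\<Union>n. U n \<omega>) \<subseteq> (\<Union>k. \<pi> k \<omega>)" unfolding U_def by blast
  qed
  have cr: "crset F M \<tau>"
  proof (rule crsetI)
    fix \<omega> assume "\<omega> \<in> space F" then show "\<tau> \<omega> \<in> cset_space M" by (rule tsp)
  next
    fix A m assume A: "A \<in> sets M"
    have "{\<omega>\<in>space F. enat m \<le> cnt A (\<tau> \<omega>)} = (\<Union>n. {\<omega>\<in>space F. m \<le> card (A \<inter> U n \<omega>)})"
    proof (intro set_eqI iffI)
      fix \<omega> assume "\<omega> \<in> {\<omega>\<in>space F. enat m \<le> cnt A (\<tau> \<omega>)}"
      then have w: "\<omega> \<in> space F" and le: "enat m \<le> cnt A (\<tau> \<omega>)" by auto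
      have tw: "\<tau> \<omega> = (\<Union>n. U n \<omega>)" using tau[OF w] unU by simp
      have "\<exists>D. D \<subseteq> A \<inter> \<tau> \<omega> \<and> finite D \<and> card D = m" using le by (simp only: enat_le_cnt_iff)
      then obtain Dd where Dd: "Dd \<subseteq> A \<inter> \<tau> \<omega>" "finite Dd" "card Dd = m" by blast
      have DU: "Dd \<subseteq> (\<Union>n. U n \<omega>)" using Dd(1) tw by blast
      obtain N where N: "Dd \<subseteq> (\<Union>n<N. U n \<omega>)" using finite_subset_UN_prefix[OF Dd(2) DU] by blast
      have "(\<Union>n<N. U n \<omega>) \<subseteq> U N \<omega>"
      proof
        fix x assume "x \<in> (\<Union>n<N. U n \<omega>)"
        then obtain n k where "n < N" "k < n" "x \<in> \<pi> k \<omega>" unfolding U_def by blast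
        then have "k < N" "x \<in> \<pi> k \<omega>" by simp_all
        then show "x \<in> U N \<omega>" unfolding U_def by blast
      qed
      then have sub: "Dd \<subseteq> A \<inter> U N \<omega>" using N Dd(1) by blast
      have "finite (U N \<omega>)" using finite_crset_sub[OF U w] by simp
      then have "card Dd \<le> card (A \<inter> U N \<omega>)" using sub by (intro card_mono) auto
      then show "\<omega> \<in> (\<Union>n. {\<omega>\<in>space F. m \<le> card (A \<inter> U n \<omega>)})" using w Dd(3) by blast
    next
      fix \<omega> assume "\<omega> \<in> (\<Union>n. {\<omega>\<in>space F. m \<le> card (A \<inter> U n \<omega>)})"
      then obtain n where w: "\<omega> \<in> space F" and c: "m \<le> card (A \<inter> U n \<omega>)" by blast
      have tw: "\<tau> \<omega> = (\<Union>n. U n \<omega>)" using tau[OF w] unU by simp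
      have fin: "finite (A \<inter> U n \<omega>)" using finite_crset_sub[OF U w] by simp
      obtain Dd where Dd: "Dd \<subseteq> A \<inter> U n \<omega>" "card Dd = m" using obtain_subset_with_card_n[OF c] by blast
      have "Dd \<subseteq> A \<inter> \<tau> \<omega>" using Dd(1) tw by blast
      moreover have "finite Dd" using fin Dd(1) by (rule finite_subset[rotated])
      ultimately have "\<exists>D. D \<subseteq> A \<inter> \<tau> \<omega> \<and> finite D \<and> card D = m" using Dd(2) by blast
      then have "enat m \<le> cnt A (\<tau> \<omega>)" by (simp only: enat_le_cnt_iff)
      then show "\<omega> \<in> {\<omega>\<in>space F. enat m \<le> cnt A (\<tau> \<omega>)}" using w by blast
    qed
    also have "\<dots> \<in> sets F" using natm_ge_sets[OF finite_crset_card[OF U A]] by auto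
    finally show "{\<omega>\<in>space F. enat m \<le> cnt A (\<tau> \<omega>)} \<in> sets F" .
  qed
  have "\<forall>\<omega>\<in>space F. \<tau> \<omega> = (\<Union>n. \<rho> n \<omega>)" using tau unr by simp
  then show ?thesis
    using rho disj cr by (intro conjI exI[of _ \<rho>]) auto
qed

end
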